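(* Assume $\mu_n\to0$ and $n^{1/2}\mu_n\to\infty$, and suppose $\theta_n\in\mathbb R$ satisfies $\theta_n/\mu_n\to\zeta\in\mathbb R\cup\{-\infty,\infty\}$. 1. If $\zeta=0$ and $n^{1/2}\theta_n\to\nu\in\mathbb R$, then $F_{A,n,\theta_n}$ converges weakly to the cdf $\mathbf 1(\cdot\ge-\nu)$ (pointmass at $-\nu$). 2. If $-\infty<\zeta<0$, or if $\zeta=0$ and $n^{1/2}\theta_n\to-\infty$, or if $\zeta=-\infty$ and $n^{1/2}\mu_n^2/\theta_n\to-\infty$, then $F_{A,n,\theta_n}(x)\to0$ for every $x\in\mathbb R$. If $0<\zeta<\infty$, or if $\zeta=0$ and $n^{1/2}\theta_n\to\infty$, or if $\zeta=\infty$ and $n^{1/2}\mu_n^2/\theta_n\to\infty$, then $F_{A,n,\theta_n}(x)\to1$ for every $x\in\mathbb R$. 3. If $|\zeta|=\infty$ and $n^{1/2}\mu_n^2/\theta_n\to r\in\mathbb R$, then $F_{A,n,\theta_n}$ converges weakly to the cdf $\Phi(\cdot+r)$.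
   Context: Gaussian location model: for each sample size $n$, $y_1,\dots,y_n$ are i.i.d. $N(\theta,1)$ with $\theta\in\mathbb R$ unknown; $\bar y$ is their mean. $P_{n,\theta}$ denotes the probability governing a sample of size $n$ when $\theta$ is the true parameter. Given a nonrandom tuning parameter $\mu_n>0$, the adaptive LASSO estimator is $\hat\theta_A=0$ if $|\bar y|\le\mu_n$ and $\hat\theta_A=\bar y-\mu_n^2/\bar y$ if $|\bar y|>\mu_n$. $F_{A,n,\theta}$ denotes the cdf of $n^{1/2}(\hat\theta_A-\theta)$ under $P_{n,\theta}$. $\Phi$ is the standard normal cdf. *)

theory Defs
  imports "HOL-Probability.Probability"
begin

text \<open>Adaptive LASSO estimator in the Gaussian location model, as a function of the
  tuning parameter mu and of the sample mean yb.\<close>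
definition adaptive_lasso :: "real \<Rightarrow> real \<Rightarrow> real" where
  "adaptive_lasso mu yb = (if \<bar>yb\<bar> \<le> mu then 0 else yb - mu\<^sup>2 / yb)"

definition sample_law :: "nat \<Rightarrow> real \<Rightarrow> (nat \<Rightarrow> real) measure" where
  "sample_law n \<theta> = PiM {..<n} (\<lambda>_. density lborel (normal_density \<theta> 1))"

definition sample_mean :: "nat \<Rightarrow> (nat \<Rightarrow> real) \<Rightarrow> real" where
  "sample_mean n y = (\<Sum>i<n. y i) / real n"

definition F_A :: "real \<Rightarrow> nat \<Rightarrow> real \<Rightarrow> real \<Rightarrow> real" where
  "F_A mu n \<theta> x = measure (sample_law n \<theta>)
     {y \<in> space (sample_law n \<theta>). sqrt (real n) * (adaptive_lasso mu (sample_mean n y) - \<theta>) \<le> x}"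

definition Phi :: "real \<Rightarrow> real" where
  "Phi x = cdf std_normal_distribution x"

end

theory Submission imports Defs begin

lemma sample_law_prob: "prob_space (sample_law n \<theta>)"
  unfolding sample_law_def
  by (intro prob_space_PiM prob_space_normal_density) auto

lemma coord_distr:
  assumes "i < n"
  shows "distr (sample_law n \<theta>) borel (\<lambda>y. y i) = density lborel (normal_density \<theta> 1)"
proof -
  have "distr (sample_law n \<theta>) borel (\<lambda>y. y i) = distr (sample_law n \<theta>) (density lborel (normal_density \<theta> 1)) (\<lambda>y. y i)"
    by (rule distr_cong) auto
  also have "\<dots> = density lborel (normal_density \<theta> 1)"
    unfolding sample_law_def
    by (rule distr_PiM_component) (auto intro: prob_space_normal_density assms)
  finally show ?thesis .
qed

lemma indep_coords:
  assumes "n > 0"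
  shows "prob_space.indep_vars (sample_law n \<theta>) (\<lambda>i. borel) (\<lambda>i y. y i) {..<n}"
proof -
  interpret prob_space "sample_law n \<theta>" by (rule sample_law_prob)
  have rv: "random_variable borel (\<lambda>y. y i)" if "i \<in> {..<n}" for i
    using that unfolding sample_law_def by measurable
  have "distr (sample_law n \<theta>) (\<Pi>\<^sub>M i\<in>{..<n}. borel) (\<lambda>x. \<lambda>i\<in>{..<n}. x i) = sample_law n \<theta>"
  proof -
    have "distr (sample_law n \<theta>) (\<Pi>\<^sub>M i\<in>{..<n}. borel) (\<lambda>x. \<lambda>i\<in>{..<n}. x i)
       = distr (sample_law n \<theta>) (sample_law n \<theta>) (\<lambda>x. x)"
      apply (rule distr_cong)
        apply simp
       apply (simp add: sample_law_def, intro sets_PiM_cong, auto)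
      apply (auto simp: sample_law_def space_PiM PiE_def extensional_def restrict_def)
      done
    then show ?thesis by simp
  qed
  moreover have "(\<Pi>\<^sub>M i\<in>{..<n}. distr (sample_law n \<theta>) borel (\<lambda>x. x i)) = sample_law n \<theta>"
    unfolding sample_law_def[of n \<theta>]
    by (rule PiM_cong) (auto simp: coord_distr[unfolded sample_law_def])
  ultimately show ?thesis
    using assms by (subst indep_vars_iff_distr_eq_PiM') (auto intro: rv)
qed

lemma coord_normal:
  assumes "i < n"
  shows "distributed (sample_law n \<theta>) lborel (\<lambda>y. y i) (normal_density \<theta> 1)"
proof -
  have "distr (sample_law n \<theta>) lborel (\<lambda>y. y i) = distr (sample_law n \<theta>) borel (\<lambda>y. y i)"
    by (rule distr_cong) auto
  moreover have "i \<in> {..<n}" using assms by simp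
  then have "(\<lambda>y. y i) \<in> borel_measurable (sample_law n \<theta>)"
    unfolding sample_law_def by measurable
  ultimately show ?thesis
    unfolding distributed_def using coord_distr[OF assms]
    by auto
qed

lemma mean_std:
  assumes n: "n > 0"
  shows "distributed (sample_law n \<theta>) lborel (\<lambda>y. sqrt (real n) * (sample_mean n y - \<theta>)) std_normal_density"
proof -
  interpret prob_space "sample_law n \<theta>" by (rule sample_law_prob)
  have "distributed (sample_law n \<theta>) lborel (\<lambda>y. \<Sum>i\<in>{..<n}. y i)
      (normal_density (\<Sum>i\<in>{..<n}. \<theta>) (sqrt (\<Sum>i\<in>{..<n}. 1\<^sup>2)))"
    using n by (intro sum_indep_normal indep_coords coord_normal) auto
  then have S: "distributed (sample_law n \<theta>) lborel (\<lambda>y. \<Sum>i\<in>{..<n}. y i)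
      (normal_density (real n * \<theta>) (sqrt (real n)))" by simp
  have sn: "sqrt (real n) > 0" using n by simp
  have "distributed (sample_law n \<theta>) lborel (\<lambda>y. (- sqrt (real n) * \<theta>) + (1 / sqrt (real n)) * (\<Sum>i\<in>{..<n}. y i))
     (normal_density ((- sqrt (real n) * \<theta>) + (1 / sqrt (real n)) * (real n * \<theta>)) (\<bar>1 / sqrt (real n)\<bar> * sqrt (real n)))"
    using sn by (intro normal_density_affine[OF S]) auto
  moreover have "(- sqrt (real n) * \<theta>) + (1 / sqrt (real n)) * (real n * \<theta>) = 0"
    using sn by (simp add: field_simps)
  moreover have "\<bar>1 / sqrt (real n)\<bar> * sqrt (real n) = 1" using sn by simp
  moreover have "(\<lambda>y. (- sqrt (real n) * \<theta>) + (1 / sqrt (real n)) * (\<Sum>i\<in>{..<n}. y i))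
      = (\<lambda>y. sqrt (real n) * (sample_mean n y - \<theta>))"
  proof
    fix y :: "nat \<Rightarrow> real"
    have "real n = sqrt (real n) * sqrt (real n)" by simp
    define q where "q = sqrt (real n)"
    have qq: "real n = q * q" "q > 0" using sn by (auto simp: q_def)
    show "(- sqrt (real n) * \<theta>) + (1 / sqrt (real n)) * (\<Sum>i\<in>{..<n}. y i) = sqrt (real n) * (sample_mean n y - \<theta>)"
      unfolding sample_mean_def q_def[symmetric] qq(1) using qq(2)
      by (simp add: field_simps)
  qed
  ultimately show ?thesis by simp
qed

definition GG :: "real \<Rightarrow> real \<Rightarrow> real \<Rightarrow> real" where
  "GG m a z = (if \<bar>a + z\<bar> \<le> m then - a else z - m\<^sup>2 / (a + z))"

lemma GG_meas[measurable]: "GG m a \<in> borel_measurable borel"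
  unfolding GG_def by measurable

lemma GG_alg:
  assumes s: "s > 0"
  shows "s * (adaptive_lasso \<mu> (\<theta> + z / s) - \<theta>) = GG (s * \<mu>) (s * \<theta>) z"
proof -
  define w where "w = \<theta> + z / s"
  have sw: "s * w = s * \<theta> + z" using s by (simp add: w_def field_simps)
  have c: "(\<bar>w\<bar> \<le> \<mu>) = (\<bar>s * \<theta> + z\<bar> \<le> s * \<mu>)"
    using s by (simp add: sw[symmetric] abs_mult)
  show ?thesis
  proof (cases "\<bar>w\<bar> \<le> \<mu>")
    case True
    then show ?thesis using c unfolding adaptive_lasso_def GG_def w_def[symmetric] by simp
  next
    case False
    show ?thesis
    proof (cases "w = 0")
      case True
      then show ?thesis using c False sw unfolding adaptive_lasso_def GG_def w_def[symmetric] by simp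
    next
      case w0: False
      have "(s * \<mu>)\<^sup>2 / (s * \<theta> + z) = s * \<mu>\<^sup>2 / w"
        unfolding sw[symmetric] using s w0 by (simp add: power2_eq_square field_simps)
      then show ?thesis using c False sw unfolding adaptive_lasso_def GG_def w_def[symmetric]
        by (simp add: algebra_simps)
    qed
  qed
qed

lemma F_A_std:
  assumes n: "n > 0"
  shows "F_A \<mu> n \<theta> x = measure std_normal_distribution {z. GG (sqrt (real n) * \<mu>) (sqrt (real n) * \<theta>) z \<le> x}"
proof -
  define Z where "Z = (\<lambda>y. sqrt (real n) * (sample_mean n y - \<theta>))"
  define M where "M = sample_law n \<theta>"
  define A where "A = {z. GG (sqrt (real n) * \<mu>) (sqrt (real n) * \<theta>) z \<le> x}"
  have D: "distributed M lborel Z std_normal_density"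
    unfolding M_def Z_def by (rule mean_std[OF n])
  have sn: "sqrt (real n) > 0" using n by simp
  have mean: "sample_mean n y = \<theta> + Z y / sqrt (real n)" for y
    using sn unfolding Z_def by simp
  have A: "A \<in> sets lborel" unfolding A_def by measurable
  have Zm: "Z \<in> measurable M lborel" using D by (simp add: distributed_def)
  have "F_A \<mu> n \<theta> x = measure M (Z -` A \<inter> space M)"
    unfolding F_A_def M_def[symmetric] A_def
    by (rule arg_cong[where f="measure M"]) (auto simp: mean GG_alg[OF sn])
  also have "\<dots> = measure (distr M lborel Z) A"
    using measure_distr[OF Zm A] by simp
  also have "\<dots> = measure std_normal_distribution A"
    using D by (simp add: distributed_def)
  finally show ?thesis unfolding A_def .
qed

lemma meas_conv:
  fixes G :: "nat \<Rightarrow> real \<Rightarrow> real"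
  assumes meas: "\<And>n. G n \<in> borel_measurable borel"
    and ev: "AE z in std_normal_distribution. eventually (\<lambda>n. (G n z \<le> x) = Q z) sequentially"
    and Qm: "{z. Q z} \<in> sets borel"
  shows "(\<lambda>n. measure std_normal_distribution {z. G n z \<le> x}) \<longlonglongrightarrow> measure std_normal_distribution {z. Q z}"
proof -
  let ?M = std_normal_distribution
  interpret prob_space ?M by (rule prob_space_normal_density) simp
  have sm: "space ?M = UNIV" by simp
  have "(\<lambda>n. integral\<^sup>L ?M (indicator {z. G n z \<le> x} :: real \<Rightarrow> real)) \<longlonglongrightarrow> integral\<^sup>L ?M (indicator {z. Q z})"
  proof (rule integral_dominated_convergence[where w="\<lambda>_. 1"])
    show "indicator {z. Q z} \<in> borel_measurable ?M" using Qm by simp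
    show "(indicator {z. G n z \<le> x} :: real \<Rightarrow> real) \<in> borel_measurable ?M" for n
      using meas[of n] by measurable
    show "integrable ?M (\<lambda>_. 1::real)" by simp
    show "AE z in ?M. (\<lambda>n. indicator {z. G n z \<le> x} z :: real) \<longlonglongrightarrow> indicator {z. Q z} z"
      using ev
    proof eventually_elim
      case (elim z)
      then have "eventually (\<lambda>n. indicator {z. G n z \<le> x} z = (indicator {z. Q z} z :: real)) sequentially"
        by eventually_elim (simp add: indicator_def)
      then show ?case by (rule tendsto_eventually)
    qed
    show "AE z in ?M. norm (indicator {z. G n z \<le> x} z :: real) \<le> 1" for n
      by (simp add: indicator_def)
  qed
  then show ?thesis by (simp add: sm)
qed

lemma GG_L1:
  fixes m a :: "nat \<Rightarrow> real"
  assumes m: "filterlim m at_top sequentially" and a: "a \<longlonglongrightarrow> \<nu>"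
  shows "(\<lambda>n. GG (m n) (a n) z) \<longlonglongrightarrow> - \<nu>"
proof -
  have "(\<lambda>n. a n + z) \<longlonglongrightarrow> \<nu> + z" using a by (intro tendsto_intros)
  then have e1: "eventually (\<lambda>n. dist (a n + z) (\<nu> + z) < 1) sequentially"
    by (rule tendstoD) simp
  have e2: "eventually (\<lambda>n. m n \<ge> \<bar>\<nu> + z\<bar> + 1) sequentially"
    using m by (simp add: filterlim_at_top)
  have "eventually (\<lambda>n. GG (m n) (a n) z = - a n) sequentially"
    using e1 e2
  proof eventually_elim
    case (elim n)
    then have "\<bar>a n + z\<bar> \<le> m n" by (simp add: dist_real_def)
    then show ?case by (simp add: GG_def)
  qed
  moreover have "(\<lambda>n. - a n) \<longlonglongrightarrow> - \<nu>" using a by (intro tendsto_intros)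
  ultimately show ?thesis using tendsto_cong by fastforce
qed

lemma GG_L2:
  fixes m a :: "nat \<Rightarrow> real"
  assumes m: "filterlim m at_top sequentially" and a: "filterlim a at_bot sequentially"
    and q: "(\<lambda>n. (a n + z) / (m n)\<^sup>2) \<longlonglongrightarrow> 0"
  shows "filterlim (\<lambda>n. GG (m n) (a n) z) at_top sequentially"
proof -
  have A1: "filterlim (\<lambda>n. - a n) at_top sequentially"
    using a by (simp add: filterlim_uminus_at_bot)
  have neg: "eventually (\<lambda>n. a n + z < 0) sequentially"
  proof -
    have "eventually (\<lambda>n. a n \<le> - z - 1) sequentially" using a by (simp add: filterlim_at_bot)
    then show ?thesis by eventually_elim simp
  qed
  have mpos: "eventually (\<lambda>n. m n > 0) sequentially"
    using m by (simp add: filterlim_at_top_dense)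
  have neg2: "eventually (\<lambda>n. (a n + z) / (m n)\<^sup>2 < 0) sequentially"
    using neg mpos by eventually_elim (simp add: divide_neg_pos)
  have "filterlim (\<lambda>n. (a n + z) / (m n)\<^sup>2) (at_left 0) sequentially"
    by (rule tendsto_imp_filterlim_at_left[OF q neg2])
  then have "filterlim (\<lambda>n. inverse ((a n + z) / (m n)\<^sup>2)) at_bot sequentially"
    by (rule filterlim_compose[OF filterlim_inverse_at_bot_neg])
  then have "filterlim (\<lambda>n. (m n)\<^sup>2 / (a n + z)) at_bot sequentially"
    by (simp add: inverse_eq_divide)
  then have "filterlim (\<lambda>n. - ((m n)\<^sup>2 / (a n + z))) at_top sequentially"
    by (simp add: filterlim_uminus_at_bot)
  then have "filterlim (\<lambda>n. z + - ((m n)\<^sup>2 / (a n + z))) at_top sequentially"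
    by (intro filterlim_tendsto_add_at_top[where c=z] tendsto_const)
  then have A2: "filterlim (\<lambda>n. z - (m n)\<^sup>2 / (a n + z)) at_top sequentially"
    by simp
  have "filterlim (\<lambda>n. min (- a n) (z - (m n)\<^sup>2 / (a n + z))) at_top sequentially"
    using A1 A2 unfolding filterlim_at_top
    by (auto intro: eventually_conj)
  then show ?thesis
    by (rule filterlim_at_top_mono) (auto simp: GG_def)
qed

lemma GG_sym: "GG m a z = - GG m (- a) (- z)"
proof -
  have e: "- a + - z = - (a + z)" by simp
  show ?thesis unfolding GG_def e abs_minus_cancel divide_minus_right by simp
qed

lemma GG_L3:
  fixes m a :: "nat \<Rightarrow> real"
  assumes m: "filterlim m at_top sequentially" and a: "filterlim a at_top sequentially"
    and q: "(\<lambda>n. (a n + z) / (m n)\<^sup>2) \<longlonglongrightarrow> 0"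
  shows "filterlim (\<lambda>n. GG (m n) (a n) z) at_bot sequentially"
proof -
  have "filterlim (\<lambda>n. GG (m n) (- a n) (- z)) at_top sequentially"
  proof (rule GG_L2[OF m])
    show "filterlim (\<lambda>n. - a n) at_bot sequentially" using a by (simp add: filterlim_uminus_at_top[symmetric])
    have "(\<lambda>n. - ((a n + z) / (m n)\<^sup>2)) \<longlonglongrightarrow> - 0" using q by (intro tendsto_intros)
    moreover have "(- a n + - z) / (m n)\<^sup>2 = - ((a n + z) / (m n)\<^sup>2)" for n
      by (simp add: minus_divide_left)
    ultimately show "(\<lambda>n. (- a n + - z) / (m n)\<^sup>2) \<longlonglongrightarrow> 0" by simp
  qed
  then show ?thesis
    by (subst GG_sym) (rule filterlim_uminus_at_top[THEN iffD1])
qed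

lemma GG_L4:
  fixes m a :: "nat \<Rightarrow> real"
  assumes m: "filterlim m at_top sequentially"
    and q: "filterlim (\<lambda>n. \<bar>a n\<bar> / m n) at_top sequentially"
    and r: "(\<lambda>n. (m n)\<^sup>2 / a n) \<longlonglongrightarrow> r"
  shows "(\<lambda>n. GG (m n) (a n) z) \<longlonglongrightarrow> z - r"
proof -
  have e1: "eventually (\<lambda>n. \<bar>a n\<bar> / m n \<ge> 3) sequentially"
    using q by (simp add: filterlim_at_top)
  have e2: "eventually (\<lambda>n. m n \<ge> \<bar>z\<bar> + 1) sequentially"
    using m by (simp add: filterlim_at_top)
  have e3: "eventually (\<lambda>n. \<bar>a n\<bar> \<ge> 3 * m n \<and> m n \<ge> \<bar>z\<bar> + 1) sequentially"
    using e1 e2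
  proof eventually_elim
    case (elim n)
    then have "m n > 0" by linarith
    with elim show ?case by (simp add: pos_le_divide_eq)
  qed
  have e4: "eventually (\<lambda>n. \<bar>a n + z\<bar> > m n \<and> a n \<noteq> 0 \<and> a n + z \<noteq> 0) sequentially"
    using e3 by eventually_elim (auto simp: abs_if split: if_splits)
  have ma: "eventually (\<lambda>n. m n \<le> \<bar>a n\<bar>) sequentially"
    using e3 by eventually_elim auto
  have "filterlim (\<lambda>n. \<bar>a n\<bar>) at_top sequentially"
    by (rule filterlim_at_top_mono[OF m ma])
  then have ainf: "filterlim a at_infinity sequentially"
    by (simp add: filterlim_at_infinity_conv_norm_at_top)
  have "(\<lambda>n. 1 + z / a n) \<longlonglongrightarrow> 1 + 0"
    by (intro tendsto_intros tendsto_divide_0[OF tendsto_const ainf])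
  moreover have "eventually (\<lambda>n. 1 + z / a n = (a n + z) / a n) sequentially"
    using e4 by eventually_elim (simp add: field_simps)
  ultimately have "(\<lambda>n. (a n + z) / a n) \<longlonglongrightarrow> 1"
    using tendsto_cong by fastforce
  then have inv: "(\<lambda>n. inverse ((a n + z) / a n)) \<longlonglongrightarrow> inverse 1"
    by (intro tendsto_intros) auto
  have "(\<lambda>n. z - (m n)\<^sup>2 / a n * inverse ((a n + z) / a n)) \<longlonglongrightarrow> z - r * inverse 1"
    by (intro tendsto_diff tendsto_const tendsto_mult r inv)
  moreover have "eventually (\<lambda>n. z - (m n)\<^sup>2 / a n * inverse ((a n + z) / a n) = GG (m n) (a n) z) sequentially"
    using e4
  proof eventually_elim
    case (elim n)
    have "(m n)\<^sup>2 / a n * inverse ((a n + z) / a n) = (m n)\<^sup>2 / (a n + z)"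
      using elim by (simp add: inverse_divide)
    then show ?case using elim by (simp add: GG_def)
  qed
  ultimately show ?thesis using tendsto_cong by fastforce
qed

lemma q_fin:
  fixes m a :: "nat \<Rightarrow> real"
  assumes m: "filterlim m at_top sequentially" and c: "(\<lambda>n. a n / m n) \<longlonglongrightarrow> c"
  shows "(\<lambda>n. (a n + z) / (m n)\<^sup>2) \<longlonglongrightarrow> 0"
proof -
  have m2: "filterlim (\<lambda>n. (m n)^2) at_infinity sequentially"
    by (rule filterlim_at_top_imp_at_infinity, rule filterlim_pow_at_top[OF _ m]) simp
  have "(\<lambda>n. a n / m n * inverse (m n) + z / (m n)\<^sup>2) \<longlonglongrightarrow> c * 0 + 0"
    by (intro tendsto_add tendsto_mult c tendsto_inverse_0_at_top[OF m] tendsto_divide_0[OF tendsto_const m2])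
  moreover have "a n / m n * inverse (m n) + z / (m n)\<^sup>2 = (a n + z) / (m n)\<^sup>2" for n
    by (simp add: power2_eq_square add_divide_distrib divide_inverse algebra_simps)
  ultimately show ?thesis by simp
qed

lemma q_inf:
  fixes m a :: "nat \<Rightarrow> real"
  assumes m: "filterlim m at_top sequentially" and r: "filterlim (\<lambda>n. (m n)\<^sup>2 / a n) at_infinity sequentially"
  shows "(\<lambda>n. (a n + z) / (m n)\<^sup>2) \<longlonglongrightarrow> 0"
proof -
  have m2: "filterlim (\<lambda>n. (m n)^2) at_infinity sequentially"
    by (rule filterlim_at_top_imp_at_infinity, rule filterlim_pow_at_top[OF _ m]) simp
  have "(\<lambda>n. inverse ((m n)\<^sup>2 / a n) + z / (m n)\<^sup>2) \<longlonglongrightarrow> 0 + 0"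
    by (intro tendsto_add filterlim_compose[OF tendsto_inverse_0 r] tendsto_divide_0[OF tendsto_const m2])
  moreover have "inverse ((m n)\<^sup>2 / a n) + z / (m n)\<^sup>2 = (a n + z) / (m n)\<^sup>2" for n
    by (simp add: inverse_divide add_divide_distrib)
  ultimately show ?thesis by simp
qed

lemma F_conv:
  fixes \<mu> \<theta> :: "nat \<Rightarrow> real"
  assumes ev: "AE z in std_normal_distribution.
      eventually (\<lambda>n. (GG (sqrt (real n) * \<mu> n) (sqrt (real n) * \<theta> n) z \<le> x) = Q z) sequentially"
    and Qm: "{z. Q z} \<in> sets borel"
  shows "(\<lambda>n. F_A (\<mu> n) n (\<theta> n) x) \<longlonglongrightarrow> measure std_normal_distribution {z. Q z}"
proof -
  have "(\<lambda>n. measure std_normal_distribution {z. GG (sqrt (real n) * \<mu> n) (sqrt (real n) * \<theta> n) z \<le> x})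
     \<longlonglongrightarrow> measure std_normal_distribution {z. Q z}"
    by (rule meas_conv[OF _ ev Qm]) simp
  moreover have "eventually (\<lambda>n. measure std_normal_distribution {z. GG (sqrt (real n) * \<mu> n) (sqrt (real n) * \<theta> n) z \<le> x}
      = F_A (\<mu> n) n (\<theta> n) x) sequentially"
    unfolding eventually_sequentially
    by (rule exI[of _ 1]) (simp add: F_A_std)
  ultimately show ?thesis using tendsto_cong by fastforce
qed

lemma std_space: "measure std_normal_distribution {z. True} = 1"
proof -
  interpret prob_space std_normal_distribution by (rule prob_space_normal_density) simp
  show ?thesis using prob_space by simp
qed

theorem theorem3:
  fixes \<mu> \<theta> :: "nat \<Rightarrow> real" and \<zeta> :: ereal
  assumes mu_pos: "\<And>n. \<mu> n > 0"
    and mu_lim: "\<mu> \<longlonglongrightarrow> 0"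
    and mu_rate: "filterlim (\<lambda>n. sqrt (real n) * \<mu> n) at_top sequentially"
    and zeta: "(\<lambda>n. ereal (\<theta> n / \<mu> n)) \<longlonglongrightarrow> \<zeta>"
  shows
    "(\<forall>\<nu>::real. \<zeta> = 0 \<and> (\<lambda>n. sqrt (real n) * \<theta> n) \<longlonglongrightarrow> \<nu> \<longrightarrow>
        weak_conv (\<lambda>n. F_A (\<mu> n) n (\<theta> n)) (\<lambda>x. if x \<ge> - \<nu> then 1 else 0))
   \<and> (((- \<infinity> < \<zeta> \<and> \<zeta> < 0)
        \<or> (\<zeta> = 0 \<and> filterlim (\<lambda>n. sqrt (real n) * \<theta> n) at_bot sequentially)
        \<or> (\<zeta> = - \<infinity> \<and> filterlim (\<lambda>n. sqrt (real n) * (\<mu> n)\<^sup>2 / \<theta> n) at_bot sequentially))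
      \<longrightarrow> (\<forall>x. (\<lambda>n. F_A (\<mu> n) n (\<theta> n) x) \<longlonglongrightarrow> 0))
   \<and> (((0 < \<zeta> \<and> \<zeta> < \<infinity>)
        \<or> (\<zeta> = 0 \<and> filterlim (\<lambda>n. sqrt (real n) * \<theta> n) at_top sequentially)
        \<or> (\<zeta> = \<infinity> \<and> filterlim (\<lambda>n. sqrt (real n) * (\<mu> n)\<^sup>2 / \<theta> n) at_top sequentially))
      \<longrightarrow> (\<forall>x. (\<lambda>n. F_A (\<mu> n) n (\<theta> n) x) \<longlonglongrightarrow> 1))
   \<and> (\<forall>r::real. \<bar>\<zeta>\<bar> = \<infinity> \<and> (\<lambda>n. sqrt (real n) * (\<mu> n)\<^sup>2 / \<theta> n) \<longlonglongrightarrow> r \<longrightarrow>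
        weak_conv (\<lambda>n. F_A (\<mu> n) n (\<theta> n)) (\<lambda>x. Phi (x + r)))"
proof -
  define m where "m n = sqrt (real n) * \<mu> n" for n
  define a where "a n = sqrt (real n) * \<theta> n" for n
  have m: "filterlim m at_top sequentially" using mu_rate by (simp add: m_def[abs_def])
  have mpos: "eventually (\<lambda>n. m n > 0) sequentially"
    using m by (simp add: filterlim_at_top_dense)
  have am: "eventually (\<lambda>n. \<theta> n / \<mu> n = a n / m n) sequentially"
    unfolding eventually_sequentially
    by (rule exI[of _ 1]) (auto simp: a_def m_def)
  have rr: "sqrt (real n) * (\<mu> n)\<^sup>2 / \<theta> n = (m n)\<^sup>2 / a n" for n
  proof (cases "sqrt (real n) = 0 \<or> \<theta> n = 0")
    case True then show ?thesis by (auto simp: m_def a_def)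
  next
    case False then show ?thesis by (simp add: m_def a_def power2_eq_square)
  qed
  have Fc: "(\<lambda>n. F_A (\<mu> n) n (\<theta> n) x) \<longlonglongrightarrow> measure std_normal_distribution {z. Q z}"
    if "AE z in std_normal_distribution. eventually (\<lambda>n. (GG (m n) (a n) z \<le> x) = Q z) sequentially"
       "{z. Q z} \<in> sets borel" for x Q
    using F_conv[of \<mu> \<theta> x Q] that by (simp add: m_def a_def)
  have fin: "(\<lambda>n. a n / m n) \<longlonglongrightarrow> c" if "\<zeta> = ereal c" for c
  proof -
    have "(\<lambda>n. \<theta> n / \<mu> n) \<longlonglongrightarrow> c" using zeta that by simp
    then show ?thesis by (rule Lim_transform_eventually[OF _ am])
  qed
  have pinf: "filterlim (\<lambda>n. a n / m n) at_top sequentially" if "\<zeta> = \<infinity>"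
  proof -
    have "filterlim (\<lambda>n. \<theta> n / \<mu> n) at_top sequentially"
      using zeta that ereal_tendsto_simps2(2)[of "\<lambda>n. \<theta> n / \<mu> n"] by (simp add: comp_def)
    then show ?thesis using filterlim_cong[OF refl refl am] by blast
  qed
  have minf: "filterlim (\<lambda>n. a n / m n) at_bot sequentially" if "\<zeta> = - \<infinity>"
  proof -
    have "filterlim (\<lambda>n. \<theta> n / \<mu> n) at_bot sequentially"
      using zeta that ereal_tendsto_simps2(3)[of "\<lambda>n. \<theta> n / \<mu> n"] by (simp add: comp_def)
    then show ?thesis using filterlim_cong[OF refl refl am] by blast
  qed
  have a_top: "filterlim a at_top sequentially" if "filterlim (\<lambda>n. a n / m n) at_top sequentially"
  proof -
    have "eventually (\<lambda>n. a n / m n \<ge> 1) sequentially" using that by (simp add: filterlim_at_top)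
    then have "eventually (\<lambda>n. m n \<le> a n) sequentially" using mpos
      by eventually_elim (simp add: pos_le_divide_eq)
    then show ?thesis by (rule filterlim_at_top_mono[OF m])
  qed
  have a_bot: "filterlim a at_bot sequentially" if "filterlim (\<lambda>n. a n / m n) at_bot sequentially"
  proof -
    have "eventually (\<lambda>n. a n / m n \<le> -1) sequentially" using that by (simp add: filterlim_at_bot)
    then have "eventually (\<lambda>n. m n \<le> - a n) sequentially" using mpos
      by eventually_elim (simp add: divide_le_eq)
    then have "filterlim (\<lambda>n. - a n) at_top sequentially" by (rule filterlim_at_top_mono[OF m])
    then show ?thesis by (simp add: filterlim_uminus_at_bot)
  qed
  have amc: "eventually (\<lambda>n. a n / m n * m n = a n) sequentially"
    using mpos by eventually_elim simp
  show ?thesis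
  proof (intro conjI allI impI)
    show "weak_conv (\<lambda>n. F_A (\<mu> n) n (\<theta> n)) (\<lambda>x. if x \<ge> - \<nu> then 1 else 0)"
      if H: "\<zeta> = 0 \<and> (\<lambda>n. sqrt (real n) * \<theta> n) \<longlonglongrightarrow> \<nu>" for \<nu>
      unfolding weak_conv_def
    proof (intro allI impI)
      fix x :: real
      assume cont: "isCont (\<lambda>x. if x \<ge> - \<nu> then 1 else 0 :: real) x"
      have xne: "x \<noteq> - \<nu>"
      proof
        assume xe: "x = - \<nu>"
        have "(\<lambda>k. - \<nu> - inverse (real (Suc k))) \<longlonglongrightarrow> - \<nu> - 0"
          by (intro tendsto_intros LIMSEQ_inverse_real_of_nat)
        then have "(\<lambda>k. (\<lambda>x. if x \<ge> - \<nu> then 1 else 0 :: real) (- \<nu> - inverse (real (Suc k))))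
            \<longlonglongrightarrow> (if - \<nu> \<ge> - \<nu> then 1 else 0)"
          using cont xe by (intro isCont_tendsto_compose[where g="\<lambda>x. if x \<ge> - \<nu> then 1 else 0"]) auto
        then have "(\<lambda>k. 0::real) \<longlonglongrightarrow> 1" by simp
        then show False using LIMSEQ_unique[OF tendsto_const] by fastforce
      qed
      have aL: "a \<longlonglongrightarrow> \<nu>" using H by (simp add: a_def[abs_def])
      have GL: "(\<lambda>n. GG (m n) (a n) z) \<longlonglongrightarrow> - \<nu>" for z by (rule GG_L1[OF m aL])
      show "(\<lambda>n. F_A (\<mu> n) n (\<theta> n) x) \<longlonglongrightarrow> (if x \<ge> - \<nu> then 1 else 0)"
      proof (cases "x > - \<nu>")
        case True
        have "(\<lambda>n. F_A (\<mu> n) n (\<theta> n) x) \<longlonglongrightarrow> measure std_normal_distribution {z. True}"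
        proof (rule Fc)
          show "AE z in std_normal_distribution. eventually (\<lambda>n. (GG (m n) (a n) z \<le> x) = True) sequentially"
          proof (rule AE_I2)
            fix z show "eventually (\<lambda>n. (GG (m n) (a n) z \<le> x) = True) sequentially"
              using order_tendstoD(2)[OF GL[of z] True] by eventually_elim simp
          qed
        qed simp
        then show ?thesis using True std_space by simp
      next
        case False
        then have F: "x < - \<nu>" using xne by simp
        have "(\<lambda>n. F_A (\<mu> n) n (\<theta> n) x) \<longlonglongrightarrow> measure std_normal_distribution {z. False}"
        proof (rule Fc)
          show "AE z in std_normal_distribution. eventually (\<lambda>n. (GG (m n) (a n) z \<le> x) = False) sequentially"
          proof (rule AE_I2)
            fix z show "eventually (\<lambda>n. (GG (m n) (a n) z \<le> x) = False) sequentially"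
              using order_tendstoD(1)[OF GL[of z] F] by eventually_elim simp
          qed
        qed simp
        then show ?thesis using F by simp
      qed
    qed
  next
    fix x :: real
    assume H: "(- \<infinity> < \<zeta> \<and> \<zeta> < 0)
        \<or> (\<zeta> = 0 \<and> filterlim (\<lambda>n. sqrt (real n) * \<theta> n) at_bot sequentially)
        \<or> (\<zeta> = - \<infinity> \<and> filterlim (\<lambda>n. sqrt (real n) * (\<mu> n)\<^sup>2 / \<theta> n) at_bot sequentially)"
    have cond: "filterlim a at_bot sequentially \<and> (\<forall>z. (\<lambda>n. (a n + z) / (m n)\<^sup>2) \<longlonglongrightarrow> 0)"
    proof -
      { assume h: "- \<infinity> < \<zeta> \<and> \<zeta> < 0"
        then obtain c where c: "\<zeta> = ereal c" "c < 0" by (cases \<zeta>) auto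
        have "filterlim (\<lambda>n. a n / m n * m n) at_bot sequentially"
          by (rule filterlim_tendsto_neg_mult_at_bot[OF fin[OF c(1)] c(2) m])
        then have "filterlim a at_bot sequentially" using filterlim_cong[OF refl refl amc] by blast
        then have ?thesis using q_fin[OF m fin[OF c(1)]] by blast }
      moreover
      { assume h: "\<zeta> = 0 \<and> filterlim (\<lambda>n. sqrt (real n) * \<theta> n) at_bot sequentially"
        then have "filterlim a at_bot sequentially" by (simp add: a_def[abs_def])
        moreover have "\<zeta> = ereal 0" using h by (simp add: zero_ereal_def)
        ultimately have ?thesis using q_fin[OF m fin] by blast }
      moreover
      { assume h: "\<zeta> = - \<infinity> \<and> filterlim (\<lambda>n. sqrt (real n) * (\<mu> n)\<^sup>2 / \<theta> n) at_bot sequentially"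
        then have "filterlim (\<lambda>n. (m n)\<^sup>2 / a n) at_bot sequentially" by (simp add: rr)
        then have "filterlim (\<lambda>n. (m n)\<^sup>2 / a n) at_infinity sequentially"
          using filterlim_mono[OF _ at_bot_le_at_infinity order_refl] by blast
        then have ?thesis using q_inf[OF m] a_bot[OF minf] h by blast }
      ultimately show ?thesis using H by blast
    qed
    have "(\<lambda>n. F_A (\<mu> n) n (\<theta> n) x) \<longlonglongrightarrow> measure std_normal_distribution {z. False}"
    proof (rule Fc)
      show "AE z in std_normal_distribution. eventually (\<lambda>n. (GG (m n) (a n) z \<le> x) = False) sequentially"
      proof (rule AE_I2)
        fix z
        have "filterlim (\<lambda>n. GG (m n) (a n) z) at_top sequentially"
          using GG_L2[OF m] cond by blast
        then have "eventually (\<lambda>n. GG (m n) (a n) z > x) sequentially"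
          by (simp add: filterlim_at_top_dense)
        then show "eventually (\<lambda>n. (GG (m n) (a n) z \<le> x) = False) sequentially"
          by eventually_elim simp
      qed
    qed simp
    then show "(\<lambda>n. F_A (\<mu> n) n (\<theta> n) x) \<longlonglongrightarrow> 0" by simp
  next
    fix x :: real
    assume H: "(0 < \<zeta> \<and> \<zeta> < \<infinity>)
        \<or> (\<zeta> = 0 \<and> filterlim (\<lambda>n. sqrt (real n) * \<theta> n) at_top sequentially)
        \<or> (\<zeta> = \<infinity> \<and> filterlim (\<lambda>n. sqrt (real n) * (\<mu> n)\<^sup>2 / \<theta> n) at_top sequentially)"
    have cond: "filterlim a at_top sequentially \<and> (\<forall>z. (\<lambda>n. (a n + z) / (m n)\<^sup>2) \<longlonglongrightarrow> 0)"
    proof -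
      { assume h: "0 < \<zeta> \<and> \<zeta> < \<infinity>"
        then obtain c where c: "\<zeta> = ereal c" "c > 0" by (cases \<zeta>) auto
        have "filterlim (\<lambda>n. a n / m n * m n) at_top sequentially"
          by (rule filterlim_tendsto_pos_mult_at_top[OF fin[OF c(1)] c(2) m])
        then have "filterlim a at_top sequentially" using filterlim_cong[OF refl refl amc] by blast
        then have ?thesis using q_fin[OF m fin[OF c(1)]] by blast }
      moreover
      { assume h: "\<zeta> = 0 \<and> filterlim (\<lambda>n. sqrt (real n) * \<theta> n) at_top sequentially"
        then have "filterlim a at_top sequentially" by (simp add: a_def[abs_def])
        moreover have "\<zeta> = ereal 0" using h by (simp add: zero_ereal_def)
        ultimately have ?thesis using q_fin[OF m fin] by blast }
      moreover
      { assume h: "\<zeta> = \<infinity> \<and> filterlim (\<lambda>n. sqrt (real n) * (\<mu> n)\<^sup>2 / \<theta> n) at_top sequentially"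
        then have "filterlim (\<lambda>n. (m n)\<^sup>2 / a n) at_top sequentially" by (simp add: rr)
        then have "filterlim (\<lambda>n. (m n)\<^sup>2 / a n) at_infinity sequentially"
          by (rule filterlim_at_top_imp_at_infinity)
        then have ?thesis using q_inf[OF m] a_top[OF pinf] h by blast }
      ultimately show ?thesis using H by blast
    qed
    have "(\<lambda>n. F_A (\<mu> n) n (\<theta> n) x) \<longlonglongrightarrow> measure std_normal_distribution {z. True}"
    proof (rule Fc)
      show "AE z in std_normal_distribution. eventually (\<lambda>n. (GG (m n) (a n) z \<le> x) = True) sequentially"
      proof (rule AE_I2)
        fix z
        have "filterlim (\<lambda>n. GG (m n) (a n) z) at_bot sequentially"
          using GG_L3[OF m] cond by blast
        then have "eventually (\<lambda>n. GG (m n) (a n) z \<le> x) sequentially"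
          by (simp add: filterlim_at_bot)
        then show "eventually (\<lambda>n. (GG (m n) (a n) z \<le> x) = True) sequentially"
          by eventually_elim simp
      qed
    qed simp
    then show "(\<lambda>n. F_A (\<mu> n) n (\<theta> n) x) \<longlonglongrightarrow> 1" using std_space by simp
  next
    fix r :: real
    assume H: "\<bar>\<zeta>\<bar> = \<infinity> \<and> (\<lambda>n. sqrt (real n) * (\<mu> n)\<^sup>2 / \<theta> n) \<longlonglongrightarrow> r"
    have rl: "(\<lambda>n. (m n)\<^sup>2 / a n) \<longlonglongrightarrow> r" using H by (simp add: rr)
    have q: "filterlim (\<lambda>n. \<bar>a n\<bar> / m n) at_top sequentially"
    proof (cases "\<zeta> = \<infinity>")
      case True
      have "eventually (\<lambda>n. a n / m n \<le> \<bar>a n\<bar> / m n) sequentially"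
        using mpos by eventually_elim (simp add: divide_right_mono)
      then show ?thesis by (rule filterlim_at_top_mono[OF pinf[OF True]])
    next
      case False
      then have "\<zeta> = - \<infinity>" using H by (cases \<zeta>) auto
      then have "filterlim (\<lambda>n. - (a n / m n)) at_top sequentially"
        using minf by (simp add: filterlim_uminus_at_bot)
      moreover have "eventually (\<lambda>n. - (a n / m n) \<le> \<bar>a n\<bar> / m n) sequentially"
        using mpos by eventually_elim (simp add: field_simps)
      ultimately show ?thesis by (rule filterlim_at_top_mono)
    qed
    have GL: "(\<lambda>n. GG (m n) (a n) z) \<longlonglongrightarrow> z - r" for z by (rule GG_L4[OF m q rl])
    show "weak_conv (\<lambda>n. F_A (\<mu> n) n (\<theta> n)) (\<lambda>x. Phi (x + r))"
      unfolding weak_conv_def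
    proof (intro allI impI)
      fix x :: real
      have "(\<lambda>n. F_A (\<mu> n) n (\<theta> n) x) \<longlonglongrightarrow> measure std_normal_distribution {z. z - r \<le> x}"
      proof (rule Fc)
        have "AE z in lborel. z \<noteq> x + r" by (rule AE_lborel_singleton)
        note lb = this
        have "(AE z in std_normal_distribution. z \<noteq> x + r) \<longleftrightarrow>
            (AE z in lborel. 0 < ennreal (std_normal_density z) \<longrightarrow> z \<noteq> x + r)"
          by (rule AE_density) simp
        moreover have "AE z in lborel. 0 < ennreal (std_normal_density z) \<longrightarrow> z \<noteq> x + r"
          using lb by (rule eventually_mono) simp
        ultimately have "AE z in std_normal_distribution. z \<noteq> x + r" by simp
        then show "AE z in std_normal_distribution. eventually (\<lambda>n. (GG (m n) (a n) z \<le> x) = (z - r \<le> x)) sequentially"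
        proof eventually_elim
          case (elim z)
          show ?case
          proof (cases "z - r < x")
            case True
            show ?thesis using order_tendstoD(2)[OF GL[of z] True] by eventually_elim (use True in simp)
          next
            case False
            then have gt: "z - r > x" using elim by simp
            show ?thesis using order_tendstoD(1)[OF GL[of z] gt] by eventually_elim (use gt in simp)
          qed
        qed
      qed simp
      moreover have "{z. z - r \<le> x} = {..x + r}" by auto
      moreover have "Phi (x + r) = measure std_normal_distribution {..x + r}"
        unfolding Phi_def by (rule cdf_def2)
      ultimately show "(\<lambda>n. F_A (\<mu> n) n (\<theta> n) x) \<longlonglongrightarrow> Phi (x + r)"
        by metis
    qed
  qed
qed

end
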